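(* Let $D$ and $X$ be real vector spaces, let $M(\cdot,\cdot)$ and $N(\cdot,\cdot)$ be symmetric bilinear forms on $D$ with $M$ positive definite, let $b_G(\cdot,\cdot)$ be a symmetric positive semidefinite bilinear form on $X$, and let $T:D\to X$ be linear with $b_G(Tu,Tv)=M(u,v)$ for all $u,v\in D$. Let $v_1,\dots,v_n\in D$ and $w_1,\dots,w_n\in X$ satisfy $b_G(w_i,T\phi)=N(v_i,\phi)$ for all $\phi\in D$, $i=1,\dots,n$. Assume that for every $v\in\operatorname{span}\{v_1,\dots,v_n\}$ there exists $\tilde u\in D$ with $M(\tilde u,\phi)=N(v,\phi)$ for all $\phi\in D$. Define the $n\times n$ matrices $$A_0=(M(v_i,v_j))_{i,j},\quad A_1=(N(v_i,v_j))_{i,j},\quad A_2=(b_G(w_i,w_j))_{i,j},$$ assume $A_1$ is positive definite, and let $\Lambda_n$ be the largest eigenvalue of $A_0x=\Lambda A_1x$. If $\rho>\Lambda_n$ and $\rho>0$, then the matrix $B:=A_0-2\rho A_1+\rho^2A_2$ is positive definite. *)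

theory Defs
  imports "HOL-Analysis.Analysis"
begin

definition sym_form :: "('a \<Rightarrow> 'a \<Rightarrow> real) \<Rightarrow> bool" where
  "sym_form B \<longleftrightarrow> (\<forall>u v. B u v = B v u)"

definition pos_def_form :: "('a::real_vector \<Rightarrow> 'a \<Rightarrow> real) \<Rightarrow> bool" where
  "pos_def_form B \<longleftrightarrow> (\<forall>u. u \<noteq> 0 \<longrightarrow> B u u > 0)"

definition pos_semidef_form :: "('a \<Rightarrow> 'a \<Rightarrow> real) \<Rightarrow> bool" where
  "pos_semidef_form B \<longleftrightarrow> (\<forall>u. B u u \<ge> 0)"

definition pos_def_mat :: "real^'n^'n \<Rightarrow> bool" where
  "pos_def_mat A \<longleftrightarrow> transpose A = A \<and> (\<forall>x. x \<noteq> 0 \<longrightarrow> x \<bullet> (A *v x) > 0)"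

definition gen_eigenvalue :: "real^'n^'n \<Rightarrow> real^'n^'n \<Rightarrow> real \<Rightarrow> bool" where
  "gen_eigenvalue A0 A1 l \<longleftrightarrow> (\<exists>x. x \<noteq> 0 \<and> A0 *v x = l *\<^sub>R (A1 *v x))"

end

theory Submission
  imports Defs
begin

lemma lin2: "bilinear F \<Longrightarrow> F a (sum g S) = (\<Sum>j\<in>S. F a (g j))"
  unfolding bilinear_def using linear_sum[of "F a"] by (simp add: o_def)
lemma lin1: "bilinear F \<Longrightarrow> F (sum g S) a = (\<Sum>j\<in>S. F (g j) a)"
  unfolding bilinear_def using linear_sum[of "\<lambda>x. F x a"] by (simp add: o_def)
lemma mv_comp: "bilinear F \<Longrightarrow> ((\<chi> i j. F (v i) (v j)) *v x)$k = F (v k) (\<Sum>j\<in>UNIV. x$j *\<^sub>R v j)"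
  by (simp add: matrix_vector_mult_def lin2 bilinear_rmul mult.commute)
lemma quad: "bilinear F \<Longrightarrow> x \<bullet> ((\<chi> i j. F (v i) (v j)) *v x) = F (\<Sum>j\<in>UNIV. x$j *\<^sub>R v j) (\<Sum>j\<in>UNIV. x$j *\<^sub>R v j)"
  by (simp add: inner_vec_def mv_comp lin1 bilinear_lmul)
lemma mv_lin: "(A - c *\<^sub>R B + d *\<^sub>R C) *v (x::real^'n) = A *v x - c *\<^sub>R (B *v x) + d *\<^sub>R (C *v x)"
  by (simp add: vec_eq_iff matrix_vector_mult_def sum_subtractf sum.distrib sum_distrib_left algebra_simps)


theorem lemma4p3:
  fixes M N :: "'d::real_vector \<Rightarrow> 'd \<Rightarrow> real"
    and bG :: "'x::real_vector \<Rightarrow> 'x \<Rightarrow> real"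
    and T :: "'d \<Rightarrow> 'x"
    and v :: "'n::finite \<Rightarrow> 'd"
    and w :: "'n \<Rightarrow> 'x"
    and \<Lambda> \<rho> :: real
  assumes "bilinear M" "sym_form M" "pos_def_form M"
    and "bilinear N" "sym_form N"
    and "bilinear bG" "sym_form bG" "pos_semidef_form bG"
    and "linear T"
    and "\<forall>u z. bG (T u) (T z) = M u z"
    and "\<forall>i \<phi>. bG (w i) (T \<phi>) = N (v i) \<phi>"
    and "\<forall>z \<in> span (range v). \<exists>u. \<forall>\<phi>. M u \<phi> = N z \<phi>"
    and "pos_def_mat (\<chi> i j. N (v i) (v j))"
    and "gen_eigenvalue (\<chi> i j. M (v i) (v j)) (\<chi> i j. N (v i) (v j)) \<Lambda>"
    and "\<forall>\<mu>. gen_eigenvalue (\<chi> i j. M (v i) (v j)) (\<chi> i j. N (v i) (v j)) \<mu> \<longrightarrow> \<mu> \<le> \<Lambda>"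
    and "\<rho> > \<Lambda>" "\<rho> > 0"
  shows "pos_def_mat ((\<chi> i j. M (v i) (v j)) - (2 * \<rho>) *\<^sub>R (\<chi> i j. N (v i) (v j))
                      + (\<rho>^2) *\<^sub>R (\<chi> i j. bG (w i) (w j)))"
  proof -
  note bM = assms(1) and bN = assms(4) and bB = assms(6)
  have symM: "\<And>a b. M a b = M b a" using assms(2) unfolding sym_form_def by blast
  have symN: "\<And>a b. N a b = N b a" using assms(5) unfolding sym_form_def by blast
  have symB: "\<And>a b. bG a b = bG b a" using assms(7) unfolding sym_form_def by blast
  have psd: "\<And>a. bG a a \<ge> 0" using assms(8) unfolding pos_semidef_form_def by blast
  have pdM: "\<And>a. a \<noteq> 0 \<Longrightarrow> M a a > 0" using assms(3) unfolding pos_def_form_def by blast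
  have TM: "\<And>a b. bG (T a) (T b) = M a b" using assms(10) by blast
  have wN: "\<And>i \<phi>. bG (w i) (T \<phi>) = N (v i) \<phi>" using assms(11) by blast
  let ?A0 = "(\<chi> i j. M (v i) (v j))"
  let ?A1 = "(\<chi> i j. N (v i) (v j))"
  let ?A2 = "(\<chi> i j. bG (w i) (w j))"
  show ?thesis unfolding pos_def_mat_def
  proof (intro conjI allI impI)
    show "transpose (?A0 - (2 * \<rho>) *\<^sub>R ?A1 + (\<rho>^2) *\<^sub>R ?A2) = ?A0 - (2 * \<rho>) *\<^sub>R ?A1 + (\<rho>^2) *\<^sub>R ?A2"
      by (simp add: vec_eq_iff transpose_def symM symN symB)
  next
    fix x :: "real^'n"
    assume x0: "x \<noteq> 0"
    define V where "V = (\<Sum>j\<in>UNIV. x$j *\<^sub>R v j)"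
    define W where "W = (\<Sum>j\<in>UNIV. x$j *\<^sub>R w j)"
    have q: "x \<bullet> ((?A0 - (2 * \<rho>) *\<^sub>R ?A1 + (\<rho>^2) *\<^sub>R ?A2) *v x) = M V V - 2 * \<rho> * N V V + \<rho>^2 * bG W W"
      by (simp add: mv_lin inner_diff_right inner_add_right quad[OF bM] quad[OF bN] quad[OF bB] V_def W_def)
    have "V \<in> span (range v)" unfolding V_def
      by (intro span_sum span_scale span_base) auto
    then obtain u where u: "\<And>\<phi>. M u \<phi> = N V \<phi>" using assms(12) by blast
    have WT: "\<And>\<phi>. bG W (T \<phi>) = N V \<phi>"
      by (simp add: W_def V_def lin1[OF bB] lin1[OF bN] bilinear_lmul[OF bB] bilinear_lmul[OF bN] wN)
    define E where "E = W - T u"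
    have ET: "\<And>\<phi>. bG E (T \<phi>) = 0" by (simp add: E_def bilinear_lsub[OF bB] WT TM u)
    have "bG W W = bG E E + 2 * bG E (T u) + bG (T u) (T u)"
      unfolding E_def by (simp add: bilinear_lsub[OF bB] bilinear_rsub[OF bB] symB[of "T u" W])
    hence WW: "bG W W \<ge> M u u" using ET[of u] TM[of u u] psd[of E] by linarith
    have Mid: "M (V - \<rho> *\<^sub>R u) (V - \<rho> *\<^sub>R u) = M V V - 2 * \<rho> * N V V + \<rho>^2 * M u u"
      by (simp add: bilinear_lsub[OF bM] bilinear_rsub[OF bM] bilinear_lmul[OF bM] bilinear_rmul[OF bM] u symM[of V u] power2_eq_square algebra_simps)
    show "x \<bullet> ((?A0 - (2 * \<rho>) *\<^sub>R ?A1 + (\<rho>^2) *\<^sub>R ?A2) *v x) > 0"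
    proof (rule ccontr)
      assume nq: "\<not> ?thesis"
      hence "M (V - \<rho> *\<^sub>R u) (V - \<rho> *\<^sub>R u) \<le> 0"
        proof -
        have "\<rho>^2 * M u u \<le> \<rho>^2 * bG W W" using WW by (simp add: mult_left_mono)
        thus ?thesis using q Mid nq by linarith
      qed
      hence "V - \<rho> *\<^sub>R u = 0" using pdM[of "V - \<rho> *\<^sub>R u"] by (meson not_less)
      hence Vu: "V = \<rho> *\<^sub>R u" by simp
      have "?A0 *v x = \<rho> *\<^sub>R (?A1 *v x)"
      proof (subst vec_eq_iff, intro allI)
        fix k
        have "(?A0 *v x)$k = M (v k) V" unfolding V_def by (rule mv_comp[OF bM])
        also have "\<dots> = \<rho> * M u (v k)" by (simp add: Vu bilinear_rmul[OF bM] symM)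
        also have "\<dots> = \<rho> * N (v k) V" by (simp add: u symN)
        also have "\<dots> = (\<rho> *\<^sub>R (?A1 *v x))$k" unfolding V_def using mv_comp[OF bN, of v x k] by simp
        finally show "(?A0 *v x)$k = (\<rho> *\<^sub>R (?A1 *v x))$k" .
      qed
      hence "gen_eigenvalue ?A0 ?A1 \<rho>" unfolding gen_eigenvalue_def using x0 by blast
      hence "\<rho> \<le> \<Lambda>" using assms(15) by blast
      thus False using \<open>\<rho> > \<Lambda>\<close> by linarith
    qed
  qed
qed

end
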